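(* Let $n\ge 2$, $d\ge1$, and $p\in\mathcal H(n,d)$, and put $N=N(p)$. Suppose $p$ contains (with nonzero coefficient) a monomial of degree $d$ that depends on at most two of the variables (i.e. of the form $x_i^d$ or $x_i^a x_j^b$ with $a+b=d$). Then $$ d\le\frac{2N-3}{2n-3}. $$
   Context: $\mathcal H(n,d)$ is the set of real polynomials in $x_1,\dots,x_n$ of total degree exactly $d$, with all coefficients nonnegative, such that $p(x)=1$ whenever $\sum_{j=1}^n x_j=1$. $N(p)$ denotes the number of distinct monomials occurring with nonzero coefficient in $p$. *)

theory Defs
  imports Complex_Main
begin

text \<open>A real polynomial in the variables x_0,...,x_(n-1) is represented by its coefficient
  function c on exponent vectors alpha :: nat => nat (alpha i = exponent of x_i);
  admissible exponent vectors vanish at all indices >= n, and c has finite support.\<close>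

definition mon_support :: "((nat \<Rightarrow> nat) \<Rightarrow> real) \<Rightarrow> (nat \<Rightarrow> nat) set" where
  "mon_support c = {\<alpha>. c \<alpha> \<noteq> 0}"

definition mon_deg :: "nat \<Rightarrow> (nat \<Rightarrow> nat) \<Rightarrow> nat" where
  "mon_deg n \<alpha> = (\<Sum>i<n. \<alpha> i)"

definition is_poly :: "nat \<Rightarrow> ((nat \<Rightarrow> nat) \<Rightarrow> real) \<Rightarrow> bool" where
  "is_poly n c \<longleftrightarrow> finite (mon_support c) \<and> (\<forall>\<alpha>\<in>mon_support c. \<forall>i\<ge>n. \<alpha> i = 0)"

definition poly_eval :: "nat \<Rightarrow> ((nat \<Rightarrow> nat) \<Rightarrow> real) \<Rightarrow> (nat \<Rightarrow> real) \<Rightarrow> real" where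
  "poly_eval n c x = (\<Sum>\<alpha>\<in>mon_support c. c \<alpha> * (\<Prod>i<n. x i ^ \<alpha> i))"

definition total_degree_eq :: "nat \<Rightarrow> ((nat \<Rightarrow> nat) \<Rightarrow> real) \<Rightarrow> nat \<Rightarrow> bool" where
  "total_degree_eq n c d \<longleftrightarrow> (\<exists>\<alpha>\<in>mon_support c. mon_deg n \<alpha> = d)
      \<and> (\<forall>\<alpha>\<in>mon_support c. mon_deg n \<alpha> \<le> d)"

definition Hcal :: "nat \<Rightarrow> nat \<Rightarrow> ((nat \<Rightarrow> nat) \<Rightarrow> real) set" where
  "Hcal n d = {c. is_poly n c \<and> total_degree_eq n c d \<and> (\<forall>\<alpha>. c \<alpha> \<ge> 0)
      \<and> (\<forall>x. (\<Sum>j<n. x j) = 1 \<longrightarrow> poly_eval n c x = 1)}"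

definition num_monomials :: "((nat \<Rightarrow> nat) \<Rightarrow> real) \<Rightarrow> nat" where
  "num_monomials c = card (mon_support c)"

end

theory Submission
  imports Defs
begin

definition alt :: "(nat \<Rightarrow> real) \<Rightarrow> nat \<Rightarrow> nat \<Rightarrow> bool" where
 "alt q L m \<longleftrightarrow> (\<exists>ks::nat\<Rightarrow>nat. \<exists>e::real. (e = 1 \<or> e = -1) \<and> (\<forall>j<m. ks j < ks (Suc j))
     \<and> ks m < L \<and> (\<forall>j\<le>m. e * (-1)^j * q (ks j) \<ge> 0))"

lemma chain_mono:
  fixes ks :: "nat \<Rightarrow> nat"
  assumes "\<forall>j<m. ks j < ks (Suc j)" "i < i'" "i' \<le> m"
  shows "ks i < ks i'"
  using assms
proof (induction i' arbitrary: i)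
  case 0 then show ?case by simp
next
  case (Suc i')
  then have "ks i' < ks (Suc i')" by simp
  moreover have "i = i' \<or> i < i'" using Suc.prems by auto
  moreover have "i < i' \<Longrightarrow> ks i < ks i'" using Suc by simp
  ultimately show ?case using order.strict_trans by blast
qed

lemma chain_mono_le:
  fixes ks :: "nat \<Rightarrow> nat"
  assumes "\<forall>j<m. ks j < ks (Suc j)" "i \<le> i'" "i' \<le> m"
  shows "ks i \<le> ks i'"
proof (cases "i = i'")
  case True then show ?thesis by simp
next
  case False then show ?thesis using chain_mono[OF assms(1), of i i'] assms by simp
qed

lemma chain_ge:
  fixes ks :: "nat \<Rightarrow> nat"
  assumes "\<forall>j<m. ks j < ks (Suc j)" "i \<le> m"
  shows "i \<le> ks i"
  using assms
proof (induction i)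
  case 0 then show ?case by simp
next
  case (Suc i)
  have "i \<le> ks i" using Suc.IH Suc.prems by simp
  moreover have "ks i < ks (Suc i)" using Suc.prems(1) Suc.prems(2) by simp
  ultimately show ?case by simp
qed

lemma alt_lt: assumes "alt q L m" shows "m < L"
proof -
  obtain ks e where h: "\<forall>j<m. ks j < ks (Suc j)" "ks m < L" using assms unfolding alt_def by blast
  have "m \<le> ks m" using chain_ge[OF h(1)] by simp
  then show ?thesis using h(2) by simp
qed

lemma alt_0: "L \<ge> 1 \<Longrightarrow> alt q L 0"
  unfolding alt_def
  apply (rule exI[of _ "\<lambda>_. 0"])
  apply (rule exI[of _ "if q 0 \<ge> 0 then 1 else -1"])
  by auto

lemma alt_mono:
  assumes "alt q L m" "m' \<le> m" shows "alt q L m'"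
proof -
  obtain ks e where h: "e = 1 \<or> e = -1" "\<forall>j<m. ks j < ks (Suc j)" "ks m < L"
    "\<forall>j\<le>m. e * (-1)^j * q (ks j) \<ge> 0" using assms(1) unfolding alt_def by blast
  have "ks m' \<le> ks m" using chain_mono_le[OF h(2) assms(2)] by simp
  then show ?thesis unfolding alt_def
    using h assms(2) by (intro exI[of _ ks] exI[of _ e]) auto
qed

lemma alt_change1:
  assumes "alt q' L m" "\<forall>i. i \<noteq> ee \<longrightarrow> q i = q' i"
  shows "alt q L (m - 2)"
proof -
  obtain ks e where h: "e = 1 \<or> e = -1" "\<forall>j<m. ks j < ks (Suc j)" "ks m < L"
    "\<forall>j\<le>m. e * (-1)^j * q' (ks j) \<ge> 0" using assms(1) unfolding alt_def by blast
  have L1: "L \<ge> 1" using h(3) by simp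
  show ?thesis
  proof (cases "\<exists>j\<le>m. ks j = ee")
    case False
    then have "alt q L m" unfolding alt_def using h assms(2)
      by (intro exI[of _ ks] exI[of _ e]) auto
    then show ?thesis using alt_mono by simp
  next
    case True
    then obtain j0 where j0: "j0 \<le> m" "ks j0 = ee" by blast
    have uniq: "ks j = ee \<Longrightarrow> j \<le> m \<Longrightarrow> j = j0" for j
      using chain_mono[OF h(2), of j j0] chain_mono[OF h(2), of j0 j] j0
      by (metis nat_neq_iff order_less_irrefl)
    show ?thesis
    proof (cases "m < 2")
      case True then show ?thesis using alt_0[OF L1] by simp
    next
      case False
      define r where "r = min j0 (m - 1)"
      define ks' where "ks' = (\<lambda>j. if j < r then ks j else ks (j + 2))"
      have r1: "r \<le> j0" "r \<le> m - 1" unfolding r_def by auto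
      have A: "\<forall>j<m - 2. ks' j < ks' (Suc j)"
      proof (intro allI impI)
        fix j assume j: "j < m - 2"
        consider "Suc j < r" | "Suc j = r" | "j \<ge> r" by linarith
        then show "ks' j < ks' (Suc j)"
        proof cases
          case 1 then show ?thesis unfolding ks'_def using h(2) j by auto
        next
          case 2
          have "j + 3 \<le> m" using j by arith
          then have "ks j < ks (j + 3)" using chain_mono[OF h(2), of j "j+3"] by simp
          then show ?thesis unfolding ks'_def using 2 by (simp add: numeral_3_eq_3)
        next
          case 3 then show ?thesis unfolding ks'_def using h(2) j by auto
        qed
      qed
      have B: "ks' (m - 2) < L"
      proof -
        have "Suc (Suc (m - 2)) = m" using False by arith
        then show ?thesis
          unfolding ks'_def using chain_mono_le[OF h(2), of "m-2" m] h(3) False by auto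
      qed
      have C: "\<forall>j\<le>m - 2. e * (-1)^j * q (ks' j) \<ge> 0"
      proof (intro allI impI)
        fix j assume j: "j \<le> m - 2"
        show "e * (-1)^j * q (ks' j) \<ge> 0"
        proof (cases "j < r")
          case True
          then have "ks j \<noteq> ee" using uniq r1 j False by fastforce
          then show ?thesis unfolding ks'_def using True h(4) assms(2) j by auto
        next
          case F: False
          have "j + 2 \<noteq> j0" using F r1 j False unfolding r_def by auto
          then have "ks (j+2) \<noteq> ee" using uniq j False by fastforce
          moreover have "e * (-1)^j * q' (ks (j+2)) \<ge> 0"
          proof -
            have jm: "j + 2 \<le> m" using j False by arith
            have "e * (-1)^(j+2) * q' (ks (j+2)) \<ge> 0" using h(4) jm by blast
            then show ?thesis by (simp add: power_add)
          qed
          ultimately show ?thesis unfolding ks'_def using F assms(2) by auto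
        qed
      qed
      show ?thesis unfolding alt_def using A B C h(1) by blast
    qed
  qed
qed

lemma alt_changeset:
  assumes "finite E"
  shows "alt q' L m \<Longrightarrow> \<forall>i. i \<notin> E \<longrightarrow> q i = q' i \<Longrightarrow> alt q L (m - 2 * card E)"
  using assms
proof (induction E arbitrary: q' m rule: finite_induct)
  case empty
  then have "q = q'" by auto
  then show ?case using empty by simp
next
  case (insert x F)
  define q'' where "q'' = (\<lambda>i. if i = x then q i else q' i)"
  have "alt q'' L (m - 2)" using alt_change1[OF insert.prems(1), where q = q'' and ee = x] unfolding q''_def by auto
  moreover have "\<forall>i. i \<notin> F \<longrightarrow> q i = q'' i" using insert.prems(2) unfolding q''_def by auto
  ultimately have "alt q L (m - 2 - 2 * card F)" using insert.IH by blast
  then show ?case using insert by (simp add: diff_diff_add)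
qed

lemma alt_shift_greedy:
  fixes q s :: "nat \<Rightarrow> real"
  assumes q0: "\<forall>i\<ge>L. q i = 0" and qL: "q (L - 1) \<noteq> 0" and L1: "L \<ge> 1"
    and s_def: "\<forall>i. s i = (if i = 0 then 0 else q (i - 1)) + q i"
    and a: "alt s (Suc L) m"
  shows "alt q L m"
proof -
  obtain ks e where h: "e = 1 \<or> e = -1" "\<forall>j<m. ks j < ks (Suc j)" "ks m < Suc L"
    "\<forall>j\<le>m. e * (-1)^j * s (ks j) \<ge> 0" using a unfolding alt_def by blast
  define \<eta> where "\<eta> j = e * (-1)^j" for j :: nat
  have eta_suc: "\<eta> (Suc j) = - \<eta> j" for j unfolding \<eta>_def by simp
  have eta_nz: "\<eta> j \<noteq> 0" for j unfolding \<eta>_def using h(1) by auto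
  have sgn_s: "\<eta> j * s (ks j) \<ge> 0" if "j \<le> m" for j using h(4) that unfolding \<eta>_def by blast
  have ks_le: "ks j \<le> L" if "j \<le> m" for j using chain_mono_le[OF h(2) that order_refl] h(3) by simp
  have s_split: "\<eta> k * s i = \<eta> k * q (i - 1) + \<eta> k * q i" if "i \<ge> 1" for k i
    using s_def that by (simp add: distrib_left)
  have s_0: "s 0 = q 0" using s_def by simp
  have nzL: "q i \<noteq> 0 \<Longrightarrow> i < L" for i using q0 by (meson not_le)
  have key: "j \<le> m \<Longrightarrow> \<exists>kq. (\<forall>l<j. kq l < kq (Suc l)) \<and> (\<forall>l\<le>j. \<eta> l * q (kq l) \<ge> 0 \<and> kq l < L)
      \<and> kq j \<le> ks j" for j
  proof (induction j)
    case 0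
    have i_le: "ks 0 \<le> L" using ks_le by simp
    show ?case
    proof (cases "ks 0 \<ge> 1 \<and> \<eta> 0 * q (ks 0 - 1) \<ge> 0")
      case True
      then show ?thesis using i_le by (intro exI[of _ "\<lambda>_. ks 0 - 1"]) auto
    next
      case False
      have "\<eta> 0 * q (ks 0) \<ge> 0 \<and> ks 0 < L"
      proof (cases "ks 0 = 0")
        case True
        then show ?thesis using sgn_s[of 0] s_0 L1 by simp
      next
        case F2: False
        then have "\<eta> 0 * q (ks 0 - 1) < 0" using False by auto
        moreover have "\<eta> 0 * s (ks 0) = \<eta> 0 * q (ks 0 - 1) + \<eta> 0 * q (ks 0)"
          using s_split F2 by simp
        ultimately have "\<eta> 0 * q (ks 0) > 0" using sgn_s[of 0] by linarith
        then have "q (ks 0) \<noteq> 0" by auto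
        then show ?thesis using nzL \<open>\<eta> 0 * q (ks 0) > 0\<close> by auto
      qed
      then show ?thesis by (intro exI[of _ "\<lambda>_. ks 0"]) auto
    qed
  next
    case (Suc j)
    then obtain kq where kq: "\<forall>l<j. kq l < kq (Suc l)" "\<forall>l\<le>j. \<eta> l * q (kq l) \<ge> 0 \<and> kq l < L"
      "kq j \<le> ks j" by auto
    define i where "i = ks (Suc j)"
    have ij: "ks j < i" using h(2) Suc.prems unfolding i_def by simp
    have iL: "i \<le> L" using ks_le Suc.prems unfolding i_def by simp
    have i1: "i \<ge> 1" using ij by simp
    have sgn_i: "\<eta> (Suc j) * s i \<ge> 0" using sgn_s Suc.prems unfolding i_def by simp
    have spl: "\<eta> (Suc j) * s i = \<eta> (Suc j) * q (i - 1) + \<eta> (Suc j) * q i" using s_split i1 by simp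
    show ?case
    proof (cases "kq j < i - 1 \<and> \<eta> (Suc j) * q (i - 1) \<ge> 0")
      case True
      define kq' where "kq' = kq(Suc j := i - 1)"
      have "\<forall>l<Suc j. kq' l < kq' (Suc l)" using kq(1) True unfolding kq'_def
        by (auto simp: less_Suc_eq)
      moreover have "\<forall>l\<le>Suc j. \<eta> l * q (kq' l) \<ge> 0 \<and> kq' l < L"
        using kq(2) True iL i1 unfolding kq'_def by (auto simp: le_Suc_eq)
      moreover have "kq' (Suc j) \<le> ks (Suc j)" unfolding kq'_def i_def by simp
      ultimately show ?thesis by blast
    next
      case False
      have good: "\<eta> (Suc j) * q i \<ge> 0 \<and> i < L"
      proof (cases "\<eta> (Suc j) * q (i - 1) < 0")
        case True
        then have pos: "\<eta> (Suc j) * q i > 0" using spl sgn_i by linarith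
        then have "q i \<noteq> 0" by auto
        then show ?thesis using nzL pos by auto
      next
        case F2: False
        then have "kq j \<ge> i - 1" using False by auto
        then have kqj: "kq j = i - 1" using kq(3) ij by simp
        have "\<eta> j * q (i - 1) \<ge> 0" using kq(2) kqj by auto
        then have "\<eta> (Suc j) * q (i - 1) \<le> 0" using eta_suc by simp
        then have "\<eta> (Suc j) * q (i - 1) = 0" using F2 by simp
        then have qi1: "q (i - 1) = 0" using eta_nz by simp
        then have e1: "\<eta> (Suc j) * s i = \<eta> (Suc j) * q i" using spl by simp
        have "\<eta> (Suc j) * q i \<ge> 0" using e1 sgn_i by linarith
        moreover have "i \<noteq> L" using qi1 qL by auto
        ultimately show ?thesis using iL by simp
      qed
      define kq' where "kq' = kq(Suc j := i)"
      have "\<forall>l<Suc j. kq' l < kq' (Suc l)" using kq(1) kq(3) ij unfolding kq'_def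
        by (auto simp: less_Suc_eq)
      moreover have "\<forall>l\<le>Suc j. \<eta> l * q (kq' l) \<ge> 0 \<and> kq' l < L"
        using kq(2) good unfolding kq'_def by (auto simp: le_Suc_eq)
      moreover have "kq' (Suc j) \<le> ks (Suc j)" unfolding kq'_def i_def by simp
      ultimately show ?thesis by blast
    qed
  qed
  obtain kq where kq: "\<forall>l<m. kq l < kq (Suc l)" "\<forall>l\<le>m. \<eta> l * q (kq l) \<ge> 0 \<and> kq l < L"
    using key[of m] by auto
  show ?thesis unfolding alt_def using h(1) kq unfolding \<eta>_def
    by (intro exI[of _ kq] exI[of _ e]) auto
qed

lemma alt_shift:
  fixes q :: "nat \<Rightarrow> real"
  shows "\<forall>i\<ge>L. q i = 0 \<Longrightarrow> \<exists>i<L. q i \<noteq> 0 \<Longrightarrow>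
    alt (\<lambda>i. (if i = 0 then 0 else q (i - 1)) + q i) (Suc L) m \<Longrightarrow> alt q L m"
proof (induction L arbitrary: m)
  case 0 then show ?case by simp
next
  case (Suc L)
  let ?s = "\<lambda>i. (if i = 0 then 0 else q (i - 1)) + q i"
  show ?case
  proof (cases "q L = 0")
    case False
    then show ?thesis using alt_shift_greedy[of "Suc L" q ?s m] Suc.prems by simp
  next
    case True
    have q0: "\<forall>i\<ge>L. q i = 0" using Suc.prems(1) True by (metis le_eq_less_or_eq Suc_leI)
    have ne: "\<exists>i<L. q i \<noteq> 0" using Suc.prems(2) True by (metis less_Suc_eq)
    show ?thesis
    proof (cases "m = 0")
      case True then show ?thesis using alt_0 by simp
    next
      case False
      obtain ks e where h: "e = 1 \<or> e = -1" "\<forall>j<m. ks j < ks (Suc j)" "ks m < Suc (Suc L)"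
        "\<forall>j\<le>m. e * (-1)^j * ?s (ks j) \<ge> 0" using Suc.prems(3) unfolding alt_def by blast
      have "ks (m - 1) < ks m" using h(2) False by (metis Suc_pred' not_gr_zero lessI)
      then have "alt ?s (Suc L) (m - 1)" unfolding alt_def using h
        by (intro exI[of _ ks] exI[of _ e]) auto
      then have "alt q L (m - 1)" using Suc.IH q0 ne by blast
      then obtain kq e' where g: "e' = 1 \<or> e' = -1" "\<forall>j<m - 1. kq j < kq (Suc j)" "kq (m - 1) < L"
        "\<forall>j\<le>m - 1. e' * (-1)^j * q (kq j) \<ge> 0" unfolding alt_def by blast
      define kq' where "kq' = kq(m := L)"
      have "\<forall>j<m. kq' j < kq' (Suc j)"
      proof (intro allI impI)
        fix j assume "j < m"
        then consider "j < m - 1" | "j = m - 1" by linarith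
        then show "kq' j < kq' (Suc j)"
        proof cases
          case 1 then show ?thesis using g(2) unfolding kq'_def by auto
        next
          case 2 then show ?thesis using g(3) False unfolding kq'_def by auto
        qed
      qed
      moreover have "kq' m < Suc L" unfolding kq'_def by simp
      moreover have "\<forall>j\<le>m. e' * (-1)^j * q (kq' j) \<ge> 0"
        using g(4) True unfolding kq'_def by (auto simp: le_Suc_eq)
      ultimately show ?thesis unfolding alt_def using g(1) by blast
    qed
  qed
qed

lemma card_nz_Suc:
  "card {i. i < Suc L \<and> s i \<noteq> (0::real)} = card {i. i < L \<and> s i \<noteq> 0} + (if s L \<noteq> 0 then 1 else 0)"
proof (cases "s L = 0")
  case True
  then have "{i. i < Suc L \<and> s i \<noteq> 0} = {i. i < L \<and> s i \<noteq> 0}" by (auto simp: less_Suc_eq)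
  then show ?thesis using True by simp
next
  case False
  then have "{i. i < Suc L \<and> s i \<noteq> 0} = insert L {i. i < L \<and> s i \<noteq> 0}" by (auto simp: less_Suc_eq)
  then show ?thesis using False by simp
qed

lemma alt_nonneg_aux:
  fixes s :: "nat \<Rightarrow> real"
  assumes nn: "\<forall>i. s i \<ge> 0"
  shows "L \<ge> 1 \<Longrightarrow> \<exists>ks e m. (e = 1 \<or> e = -1) \<and> (\<forall>j<m. ks j < ks (Suc j)) \<and> ks m = L - 1
     \<and> (\<forall>j\<le>m. e * (-1)^j * s (ks j) \<ge> 0)
     \<and> (card {i. i < L \<and> s i \<noteq> 0} = 0 \<longrightarrow> m = L - 1)
     \<and> (card {i. i < L \<and> s i \<noteq> 0} \<ge> 1 \<longrightarrow> m + card {i. i < L \<and> s i \<noteq> 0} \<ge> L)"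
proof (induction L)
  case 0 then show ?case by simp
next
  case (Suc L)
  show ?case
  proof (cases "L = 0")
    case True
    show ?thesis using True nn
      by (intro exI[of _ "\<lambda>_. 0"] exI[of _ "1::real"] exI[of _ "0::nat"]) simp
  next
    case False
    then obtain ks e m where h: "e = 1 \<or> e = -1" "\<forall>j<m. ks j < ks (Suc j)" "ks m = L - 1"
      "\<forall>j\<le>m. e * (-1)^j * s (ks j) \<ge> 0"
      "card {i. i < L \<and> s i \<noteq> 0} = 0 \<longrightarrow> m = L - 1"
      "card {i. i < L \<and> s i \<noteq> 0} \<ge> 1 \<longrightarrow> m + card {i. i < L \<and> s i \<noteq> 0} \<ge> L"
      using Suc.IH by auto
    define c where "c = card {i. i < L \<and> s i \<noteq> 0}"
    have cS: "card {i. i < Suc L \<and> s i \<noteq> 0} = c + (if s L \<noteq> 0 then 1 else 0)"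
      unfolding c_def by (rule card_nz_Suc)
    have ksL: "ks j < L" if "j \<le> m" for j
      using chain_mono_le[OF h(2) that order_refl] h(3) False by simp
    show ?thesis
    proof (cases "s L = 0")
      case True
      define ks' where "ks' = ks(Suc m := L)"
      have "\<forall>j<Suc m. ks' j < ks' (Suc j)" unfolding ks'_def using h(2) ksL
        by (auto simp: less_Suc_eq)
      moreover have "ks' (Suc m) = Suc L - 1" unfolding ks'_def by simp
      moreover have "\<forall>j\<le>Suc m. e * (-1)^j * s (ks' j) \<ge> 0"
        unfolding ks'_def using h(4) True by (auto simp: le_Suc_eq)
      moreover have "card {i. i < Suc L \<and> s i \<noteq> 0} = 0 \<longrightarrow> Suc m = Suc L - 1"
        using cS True h(5) False unfolding c_def by auto
      moreover have "card {i. i < Suc L \<and> s i \<noteq> 0} \<ge> 1 \<longrightarrow> Suc m + card {i. i < Suc L \<and> s i \<noteq> 0} \<ge> Suc L"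
        using cS True h(6) unfolding c_def by auto
      ultimately show ?thesis using h(1) by (intro exI[of _ ks'] exI[of _ e] exI[of _ "Suc m"]) blast
    next
      case sL: False
      have sLp: "s L > 0" using sL nn by (simp add: order_le_neq_trans)
      have cS1: "card {i. i < Suc L \<and> s i \<noteq> 0} = c + 1" using cS sL by simp
      show ?thesis
      proof (cases "c = 0")
        case True
        have fin: "finite {i. i < L \<and> s i \<noteq> 0}" by simp
        then have z: "\<forall>i<L. s i = 0" using True unfolding c_def by auto
        have mL: "m = L - 1" using h(5) True unfolding c_def by simp
        define e' where "e' = - ((-1::real)^m)"
        define ks' where "ks' = ks(Suc m := L)"
        have "\<forall>j<Suc m. ks' j < ks' (Suc j)" unfolding ks'_def using h(2) ksL
          by (auto simp: less_Suc_eq)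
        moreover have "ks' (Suc m) = Suc L - 1" unfolding ks'_def by simp
        moreover have "\<forall>j\<le>Suc m. e' * (-1)^j * s (ks' j) \<ge> 0"
        proof (intro allI impI)
          fix j assume j: "j \<le> Suc m"
          show "e' * (-1)^j * s (ks' j) \<ge> 0"
          proof (cases "j = Suc m")
            case True
            have "e' * (-1)^j = 1" unfolding e'_def True by simp
            then show ?thesis using True sLp unfolding ks'_def by simp
          next
            case False
            then have "ks' j < L" using ksL j unfolding ks'_def by auto
            then show ?thesis using z by simp
          qed
        qed
        moreover have "e' = 1 \<or> e' = -1" unfolding e'_def by (cases "even m") auto
        moreover have "Suc m + card {i. i < Suc L \<and> s i \<noteq> 0} \<ge> Suc L" using cS1 mL False by simp
        ultimately show ?thesis using cS1 by (intro exI[of _ ks'] exI[of _ e'] exI[of _ "Suc m"]) simp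
      next
        case cpos: False
        have mc: "m + c \<ge> L" using h(6) cpos unfolding c_def by simp
        show ?thesis
        proof (cases "e * (-1)^m = (-1::real)")
          case True
          define ks' where "ks' = ks(Suc m := L)"
          have "\<forall>j<Suc m. ks' j < ks' (Suc j)" unfolding ks'_def using h(2) ksL
            by (auto simp: less_Suc_eq)
          moreover have "ks' (Suc m) = Suc L - 1" unfolding ks'_def by simp
          moreover have "\<forall>j\<le>Suc m. e * (-1)^j * s (ks' j) \<ge> 0"
          proof (intro allI impI)
            fix j assume j: "j \<le> Suc m"
            show "e * (-1)^j * s (ks' j) \<ge> 0"
            proof (cases "j = Suc m")
              case jm: True
              have "e * (-1)^j = 1" using True unfolding jm by simp
              then show ?thesis using jm sLp unfolding ks'_def by simp
            next
              case False
              then show ?thesis using h(4) j unfolding ks'_def by auto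
            qed
          qed
          moreover have "Suc m + card {i. i < Suc L \<and> s i \<noteq> 0} \<ge> Suc L" using cS1 mc by simp
          ultimately show ?thesis using cS1 h(1) by (intro exI[of _ ks'] exI[of _ e] exI[of _ "Suc m"]) simp
        next
          case eF: False
          have em: "e * (-1)^m = 1" using eF h(1) by (cases "even m") auto
          define ks' where "ks' = ks(m := L)"
          have "\<forall>j<m. ks' j < ks' (Suc j)"
          proof (intro allI impI)
            fix j assume j: "j < m"
            show "ks' j < ks' (Suc j)"
            proof (cases "Suc j = m")
              case True then show ?thesis unfolding ks'_def using ksL j by auto
            next
              case False then show ?thesis unfolding ks'_def using h(2) j by auto
            qed
          qed
          moreover have "ks' m = Suc L - 1" unfolding ks'_def by simp
          moreover have "\<forall>j\<le>m. e * (-1)^j * s (ks' j) \<ge> 0"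
            unfolding ks'_def using h(4) em sLp by auto
          moreover have "m + card {i. i < Suc L \<and> s i \<noteq> 0} \<ge> Suc L" using cS1 mc by simp
          ultimately show ?thesis using cS1 h(1) by (intro exI[of _ ks'] exI[of _ e] exI[of _ m]) simp
        qed
      qed
    qed
  qed
qed

lemma alt_nonneg:
  fixes s :: "nat \<Rightarrow> real"
  assumes nn: "\<forall>i. s i \<ge> 0" and c1: "card {i. i < L \<and> s i \<noteq> 0} \<ge> 1"
  shows "alt s L (L - card {i. i < L \<and> s i \<noteq> 0})"
proof -
  have L1: "L \<ge> 1"
  proof (rule ccontr)
    assume "\<not> L \<ge> 1" then have "L = 0" by simp
    then show False using c1 by simp
  qed
  obtain ks e m where h: "e = 1 \<or> e = -1" "\<forall>j<m. ks j < ks (Suc j)" "ks m = L - 1"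
     "\<forall>j\<le>m. e * (-1)^j * s (ks j) \<ge> 0"
     "m + card {i. i < L \<and> s i \<noteq> 0} \<ge> L"
    using alt_nonneg_aux[OF nn L1] c1 by blast
  have "alt s L m" unfolding alt_def using h L1 by (intro exI[of _ ks] exI[of _ e]) auto
  then show ?thesis using alt_mono h(5) by simp
qed

fun Qs :: "(nat \<Rightarrow> nat \<Rightarrow> real) \<Rightarrow> nat \<Rightarrow> nat \<Rightarrow> real" where
  "Qs f 0 i = (if i = 0 then 1 - f 0 0 else 0)"
| "Qs f (Suc k) i = (if i = 0 then 0 else Qs f k (i - 1)) + Qs f k i
     - (if i \<le> Suc k then f i (Suc k - i) else 0)"

definition Pq :: "(nat \<Rightarrow> nat \<Rightarrow> real) \<Rightarrow> nat \<Rightarrow> nat \<Rightarrow> real" where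
  "Pq f k i = (if i \<le> k then f i (k - i) else 0)"

lemma Qs_Suc: "Qs f (Suc k) i = (if i = 0 then 0 else Qs f k (i - 1)) + Qs f k i - Pq f (Suc k) i"
  unfolding Pq_def by simp

lemma Qs_zero: "k < i \<Longrightarrow> Qs f k i = 0"
proof (induction k arbitrary: i)
  case 0 then show ?case by simp
next
  case (Suc k) then show ?case by simp
qed

lemma sum_shift_poly:
  fixes c :: "nat \<Rightarrow> real"
  shows "(\<Sum>i\<le>Suc K. (if i = 0 then 0 else c (i - 1)) * t^i) = t * (\<Sum>i\<le>K. c i * t^i)"
proof -
  have "(\<Sum>i\<le>Suc K. (if i = 0 then 0 else c (i - 1)) * t^i) = (\<Sum>i\<le>K. c i * t^(Suc i))"
    by (subst sum.atMost_Suc_shift) simp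
  also have "\<dots> = t * (\<Sum>i\<le>K. c i * t^i)" by (simp add: sum_distrib_left algebra_simps)
  finally show ?thesis .
qed

lemma Qs_identity:
  "(\<Sum>k\<le>K. (\<Sum>i\<le>k. f i (k - i) * t^i) * (1 + t)^(K - k)) + (\<Sum>i\<le>K. Qs f K i * t^i) = (1 + t)^K"
proof (induction K)
  case 0 then show ?case by simp
next
  case (Suc K)
  define Pp where "Pp k = (\<Sum>i\<le>k. f i (k - i) * t^i)" for k
  define A where "A = (\<Sum>k\<le>K. Pp k * (1 + t)^(K - k))"
  define B where "B = (\<Sum>i\<le>K. Qs f K i * t^i)"
  have IH: "A + B = (1 + t)^K" using Suc.IH unfolding A_def B_def Pp_def .
  have a: "(\<Sum>k\<le>Suc K. Pp k * (1 + t)^(Suc K - k)) = (1 + t) * A + Pp (Suc K)"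
  proof -
    have "(\<Sum>k\<le>K. Pp k * (1 + t)^(Suc K - k)) = (\<Sum>k\<le>K. (1 + t) * (Pp k * (1 + t)^(K - k)))"
      by (rule sum.cong) (auto simp: Suc_diff_le)
    then show ?thesis unfolding A_def by (simp add: sum_distrib_left)
  qed
  have c: "(\<Sum>i\<le>Suc K. Qs f K i * t^i) = B" unfolding B_def using Qs_zero[of K "Suc K" f] by simp
  have d: "(\<Sum>i\<le>Suc K. Pq f (Suc K) i * t^i) = Pp (Suc K)" unfolding Pp_def Pq_def by simp
  have "(\<Sum>i\<le>Suc K. Qs f (Suc K) i * t^i)
     = (\<Sum>i\<le>Suc K. (if i = 0 then 0 else Qs f K (i - 1)) * t^i) + (\<Sum>i\<le>Suc K. Qs f K i * t^i)
       - (\<Sum>i\<le>Suc K. Pq f (Suc K) i * t^i)"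
    unfolding Qs_Suc by (simp add: algebra_simps sum.distrib sum_subtractf)
  also have "\<dots> = t * B + B - Pp (Suc K)" using sum_shift_poly[where c = "Qs f K" and K = K and t = t] c d unfolding B_def by simp
  finally have e: "(\<Sum>i\<le>Suc K. Qs f (Suc K) i * t^i) = t * B + B - Pp (Suc K)" .
  have "(\<Sum>k\<le>Suc K. Pp k * (1 + t)^(Suc K - k)) + (\<Sum>i\<le>Suc K. Qs f (Suc K) i * t^i)
      = (1 + t) * (A + B)" using a e by (simp add: algebra_simps)
  then show ?case using IH unfolding Pp_def by simp
qed

lemma dkr:
  fixes f :: "nat \<Rightarrow> nat \<Rightarrow> real" and D :: nat and S :: "(nat \<times> nat) set"
  assumes D1: "D \<ge> 1" and nn: "\<forall>a b. f a b \<ge> 0" and top: "\<exists>a\<le>D. f a (D - a) \<noteq> 0"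
    and hid: "\<forall>x. (\<Sum>k\<le>D. \<Sum>i\<le>k. f i (k - i) * x^i * (1 - x)^(k - i)) = 1"
    and finS: "finite S" and supp: "\<forall>a b. a + b \<le> D \<longrightarrow> f a b \<noteq> 0 \<longrightarrow> (a, b) \<in> S"
  shows "D + 3 \<le> 2 * card S"
proof -
  have Pq_nn: "Pq f k i \<ge> 0" for k i unfolding Pq_def using nn by simp
  have Pq_zero: "k < i \<Longrightarrow> Pq f k i = 0" for k i unfolding Pq_def by simp
  have tid: "(\<Sum>k\<le>D. (\<Sum>i\<le>k. f i (k - i) * t^i) * (1 + t)^(D - k)) = (1 + t)^D" if t0: "t \<ge> 0" for t :: real
  proof -
    define x where "x = t / (1 + t)"
    have t1: "1 + t > 0" using t0 by simp
    have x1: "1 - x = 1 / (1 + t)" unfolding x_def using t1 by (simp add: field_simps)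
    have tmeq: "f i (k - i) * x^i * (1 - x)^(k - i) * (1 + t)^D = f i (k - i) * t^i * (1 + t)^(D - k)"
      if "i \<le> k" "k \<le> D" for i k
    proof -
      have pw: "(1 + t)^D = (1 + t)^i * (1 + t)^(k - i) * (1 + t)^(D - k)"
        using that by (simp add: power_add[symmetric])
      have "x^i * (1 + t)^i = t^i" unfolding x_def using t1 by (simp add: power_divide)
      moreover have "(1 - x)^(k - i) * (1 + t)^(k - i) = 1" unfolding x1 using t1 by (simp add: power_divide)
      ultimately show ?thesis unfolding pw by (simp add: algebra_simps)
    qed
    have "(1 + t)^D = (\<Sum>k\<le>D. \<Sum>i\<le>k. f i (k - i) * x^i * (1 - x)^(k - i)) * (1 + t)^D"
      using hid by simp
    also have "\<dots> = (\<Sum>k\<le>D. \<Sum>i\<le>k. f i (k - i) * x^i * (1 - x)^(k - i) * (1 + t)^D)"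
      by (simp add: sum_distrib_right)
    also have "\<dots> = (\<Sum>k\<le>D. \<Sum>i\<le>k. f i (k - i) * t^i * (1 + t)^(D - k))"
      by (rule sum.cong[OF refl], rule sum.cong[OF refl]) (simp add: tmeq)
    also have "\<dots> = (\<Sum>k\<le>D. (\<Sum>i\<le>k. f i (k - i) * t^i) * (1 + t)^(D - k))"
      by (simp add: sum_distrib_right)
    finally show ?thesis by simp
  qed
  have QD: "Qs f D i = 0" for i
  proof (cases "i \<le> D")
    case False then show ?thesis using Qs_zero by simp
  next
    case True
    have z: "(\<Sum>i\<le>D. Qs f D i * t^i) = 0" if "t \<ge> 0" for t :: real
      using Qs_identity[where K = D and f = f and t = t] tid[OF that] by simp
    have "{0::real..} \<subseteq> {t. (\<Sum>i\<le>D. Qs f D i * t^i) = 0}" using z by auto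
    moreover have "\<not> finite {0::real..}" by (simp add: infinite_Ici)
    ultimately have "\<not> finite {t::real. (\<Sum>i\<le>D. Qs f D i * t^i) = 0}" using finite_subset by blast
    then show ?thesis using polyfun_finite_roots[of "Qs f D" D] True by blast
  qed
  have nonvan: "\<exists>i<Suc k. Qs f k i \<noteq> 0" if kD: "k < D" for k
  proof (rule ccontr)
    assume "\<not> (\<exists>i<Suc k. Qs f k i \<noteq> 0)"
    then have zk: "Qs f k i = 0" for i using Qs_zero[of k i f] by (cases "i < Suc k") auto
    have neg: "Qs f (k + l) i \<le> 0" for l i
    proof (induction l arbitrary: i)
      case 0 then show ?case using zk by simp
    next
      case (Suc l)
      have "Qs f (Suc (k + l)) i \<le> 0"
        unfolding Qs_Suc using Suc.IH[of i] Suc.IH[of "i - 1"] Pq_nn[of "Suc (k + l)" i] by auto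
      then show ?case by simp
    qed
    have DD: "D = Suc (k + (D - 1 - k))" using kD by simp
    have PqD0: "Pq f D i = 0" for i
    proof -
      have "0 = Qs f D i" using QD by simp
      also have "\<dots> = (if i = 0 then 0 else Qs f (k + (D - 1 - k)) (i - 1)) + Qs f (k + (D - 1 - k)) i - Pq f D i"
        by (subst DD, subst Qs_Suc, subst DD[symmetric], rule refl)
      finally have "Pq f D i = (if i = 0 then 0 else Qs f (k + (D - 1 - k)) (i - 1)) + Qs f (k + (D - 1 - k)) i"
        by simp
      then have "Pq f D i \<le> 0" using neg[of "D - 1 - k" i] neg[of "D - 1 - k" "i - 1"] by auto
      then show ?thesis using Pq_nn[of D i] by simp
    qed
    obtain a where "a \<le> D" "f a (D - a) \<noteq> 0" using top by blast
    then show False using PqD0[of a] unfolding Pq_def by simp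
  qed
  define T where "T k = card {i. i < Suc k \<and> Pq f k i \<noteq> 0}" for k
  have acc: "k < D \<Longrightarrow> alt (Qs f k) (Suc k) m \<Longrightarrow> m \<le> 2 * (\<Sum>j\<in>{1..k}. T j)" for k m
  proof (induction k arbitrary: m)
    case 0 then show ?case using alt_lt by fastforce
  next
    case (Suc k)
    define s where "s i = (if i = 0 then 0 else Qs f k (i - 1)) + Qs f k i" for i
    define E where "E = {i. i < Suc (Suc k) \<and> Pq f (Suc k) i \<noteq> 0}"
    have finE: "finite E" unfolding E_def by simp
    have E: "\<forall>i. i \<notin> E \<longrightarrow> s i = Qs f (Suc k) i"
    proof (intro allI impI)
      fix i assume "i \<notin> E"
      then have "Pq f (Suc k) i = 0" unfolding E_def using Pq_zero[of "Suc k" i] by (cases "i < Suc (Suc k)") auto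
      then show "s i = Qs f (Suc k) i" unfolding s_def Qs_Suc by simp
    qed
    have "alt s (Suc (Suc k)) (m - 2 * card E)" by (rule alt_changeset[OF finE Suc.prems(2) E])
    then have "alt s (Suc (Suc k)) (m - 2 * T (Suc k))" unfolding T_def E_def by simp
    moreover have "\<forall>i\<ge>Suc k. Qs f k i = 0" using Qs_zero by simp
    moreover have "\<exists>i<Suc k. Qs f k i \<noteq> 0" using nonvan Suc.prems(1) by simp
    ultimately have "alt (Qs f k) (Suc k) (m - 2 * T (Suc k))"
      using alt_shift[of "Suc k" "Qs f k"] unfolding s_def by blast
    then have "m - 2 * T (Suc k) \<le> 2 * (\<Sum>j\<in>{1..k}. T j)" using Suc.IH Suc.prems(1) by simp
    then show ?case by simp
  qed
  define q where "q = Qs f (D - 1)"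
  have DS: "D = Suc (D - 1)" using D1 by simp
  have PD: "Pq f D i = (if i = 0 then 0 else q (i - 1)) + q i" for i
  proof -
    have "0 = Qs f D i" using QD by simp
    also have "\<dots> = (if i = 0 then 0 else q (i - 1)) + q i - Pq f D i"
      unfolding q_def by (subst DS, subst Qs_Suc, subst DS[symmetric], rule refl)
    finally show ?thesis by simp
  qed
  have q0: "\<forall>i\<ge>D. q i = 0" unfolding q_def using Qs_zero DS by (metis Suc_le_lessD)
  have qne: "\<exists>i<D. q i \<noteq> 0" unfolding q_def using nonvan[of "D - 1"] D1 by simp
  have TD1: "T D \<ge> 1"
  proof -
    obtain a where a: "a \<le> D" "f a (D - a) \<noteq> 0" using top by blast
    have "a \<in> {i. i < Suc D \<and> Pq f D i \<noteq> 0}" using a unfolding Pq_def by simp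
    then have "{i. i < Suc D \<and> Pq f D i \<noteq> 0} \<noteq> {}" by blast
    then show ?thesis unfolding T_def by (simp add: Suc_leI card_gt_0_iff)
  qed
  have TD2: "T D \<ge> 2"
  proof -
    define Z where "Z = {i. q i \<noteq> 0}"
    have Zsub: "Z \<subseteq> {..<D}" unfolding Z_def using q0 by (auto simp: not_less[symmetric])
    then have finZ: "finite Z" using finite_subset by blast
    have Zne: "Z \<noteq> {}" unfolding Z_def using qne by blast
    define lo where "lo = Min Z"
    define hi where "hi = Max Z"
    have lo_in: "lo \<in> Z" unfolding lo_def using finZ Zne by simp
    have hi_in: "hi \<in> Z" unfolding hi_def using finZ Zne by simp
    have lohi: "lo \<le> hi" unfolding lo_def hi_def using finZ Zne by simp
    have hiD: "hi < D" using hi_in Zsub by auto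
    have "Pq f D lo = q lo"
    proof (cases "lo = 0")
      case True then show ?thesis using PD by simp
    next
      case False
      have "lo - 1 \<notin> Z"
      proof
        assume "lo - 1 \<in> Z"
        then have "lo \<le> lo - 1" unfolding lo_def using finZ Min_le by blast
        then show False using False by simp
      qed
      then show ?thesis using PD False unfolding Z_def by simp
    qed
    then have l1: "Pq f D lo \<noteq> 0" using lo_in unfolding Z_def by simp
    have "Suc hi \<notin> Z"
    proof
      assume "Suc hi \<in> Z"
      then have "Suc hi \<le> hi" unfolding hi_def using finZ Max_ge by blast
      then show False by simp
    qed
    then have "Pq f D (Suc hi) = q hi" using PD unfolding Z_def by simp
    then have h1: "Pq f D (Suc hi) \<noteq> 0" using hi_in unfolding Z_def by simp
    have "{lo, Suc hi} \<subseteq> {i. i < Suc D \<and> Pq f D i \<noteq> 0}" using l1 h1 lohi hiD by auto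
    moreover have "card {lo, Suc hi} = 2" using lohi by simp
    moreover have "finite {i. i < Suc D \<and> Pq f D i \<noteq> 0}" by simp
    ultimately show ?thesis unfolding T_def using card_mono by metis
  qed
  have "alt (Pq f D) (Suc D) (Suc D - T D)"
    using alt_nonneg[of "Pq f D" "Suc D"] Pq_nn TD1 unfolding T_def by simp
  then have "alt (\<lambda>i. (if i = 0 then 0 else q (i - 1)) + q i) (Suc D) (Suc D - T D)"
    using PD by (metis (no_types, lifting) ext)
  then have "alt q D (Suc D - T D)" using alt_shift[of D q] q0 qne by blast
  then have main: "Suc D - T D \<le> 2 * (\<Sum>j\<in>{1..D - 1}. T j)"
    using acc[of "D - 1"] D1 unfolding q_def by simp
  have cnt: "(\<Sum>j\<in>{1..D}. T j) \<le> card S"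
  proof -
    define A where "A j = {i. i < Suc j \<and> Pq f j i \<noteq> 0}" for j
    have finA: "finite (A j)" for j unfolding A_def by simp
    have "(\<Sum>j\<in>{1..D}. T j) = card (SIGMA j:{1..D}. A j)"
      unfolding T_def A_def by (simp add: card_SigmaI finA)
    also have "\<dots> \<le> card S"
    proof (rule card_inj_on_le[of "\<lambda>(j, i). (i, j - i)"])
      show "inj_on (\<lambda>(j, i). (i, j - i)) (SIGMA j:{1..D}. A j)"
        unfolding A_def inj_on_def by auto
      show "(\<lambda>(j, i). (i, j - i)) ` (SIGMA j:{1..D}. A j) \<subseteq> S"
      proof
        fix y assume "y \<in> (\<lambda>(j, i). (i, j - i)) ` (SIGMA j:{1..D}. A j)"
        then obtain j i where ji: "j \<in> {1..D}" "i \<in> A j" "y = (i, j - i)" by auto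
        then have "i \<le> j" "f i (j - i) \<noteq> 0" unfolding A_def Pq_def by (auto split: if_splits)
        then show "y \<in> S" using supp ji by auto
      qed
      show "finite S" by (rule finS)
    qed
    finally show ?thesis .
  qed
  have spl2: "(\<Sum>j\<in>{1..D}. T j) = (\<Sum>j\<in>{1..D - 1}. T j) + T D"
    using D1 by (cases D) (auto simp: sum.cl_ivl_Suc)
  have TDle: "T D \<le> Suc D"
  proof -
    have "T D \<le> card {..<Suc D}" unfolding T_def by (rule card_mono) auto
    then show ?thesis by simp
  qed
  show ?thesis using main cnt spl2 TD2 TDle by linarith
qed

fun clu :: "nat \<Rightarrow> nat \<Rightarrow> real" where
  "clu 0 j = (if j = 0 then 2 else 0)"
| "clu (Suc 0) j = (if j = 0 then 1 else 0)"
| "clu (Suc (Suc k)) j = clu (Suc k) j + (if j = 0 then 0 else clu k (j - 1))"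

lemma clu_nn: "clu k j \<ge> 0"
  by (induction k j rule: clu.induct) auto

lemma clu_zero: "k < 2 * j \<Longrightarrow> clu k j = 0"
proof (induction k j rule: clu.induct)
  case (1 j) then show ?case by simp
next
  case (2 j) then show ?case by simp
next
  case (3 k j)
  have "clu (Suc k) j = 0" using 3 by simp
  moreover have "j \<noteq> 0 \<Longrightarrow> clu k (j - 1) = 0" using 3 by simp
  ultimately show ?case by simp
qed

lemma clu_pos: "2 * j \<le> k \<Longrightarrow> clu k j > 0"
proof (induction k j rule: clu.induct)
  case (1 j) then show ?case by simp
next
  case (2 j) then show ?case by simp
next
  case (3 k j)
  show ?case
  proof (cases "2 * j \<le> Suc k")
    case True
    then have "clu (Suc k) j > 0" using 3 by simp
    moreover have "(if j = 0 then 0 else clu k (j - 1)) \<ge> 0" using clu_nn by simp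
    ultimately show ?thesis by simp
  next
    case False
    then have j: "j \<noteq> 0" "2 * (j - 1) \<le> k" using 3(3) by auto
    then have "clu k (j - 1) > 0" using 3 by simp
    then show ?thesis using j clu_nn[of "Suc k" j] by simp
  qed
qed

definition luc :: "nat \<Rightarrow> real \<Rightarrow> real \<Rightarrow> real" where
  "luc k x y = (\<Sum>j\<le>k. clu k j * x^(k - 2 * j) * y^j)"

lemma luc_rec: "luc (Suc (Suc k)) x y = x * luc (Suc k) x y + y * luc k x y"
proof -
  have p1: "(\<Sum>j\<le>Suc (Suc k). clu (Suc k) j * x^(Suc (Suc k) - 2 * j) * y^j) = x * luc (Suc k) x y"
  proof -
    have t: "clu (Suc k) j * x^(Suc (Suc k) - 2 * j) * y^j = x * (clu (Suc k) j * x^(Suc k - 2 * j) * y^j)" for j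
    proof (cases "2 * j \<le> Suc k")
      case True
      then have "Suc (Suc k) - 2 * j = Suc (Suc k - 2 * j)" by simp
      then show ?thesis by simp
    next
      case False then show ?thesis using clu_zero[of "Suc k" j] by simp
    qed
    have "clu (Suc k) (Suc (Suc k)) = 0" using clu_zero by simp
    then have "(\<Sum>j\<le>Suc (Suc k). clu (Suc k) j * x^(Suc (Suc k) - 2 * j) * y^j)
        = (\<Sum>j\<le>Suc k. clu (Suc k) j * x^(Suc (Suc k) - 2 * j) * y^j)" by simp
    also have "\<dots> = x * luc (Suc k) x y" unfolding luc_def t by (simp only: sum_distrib_left)
    finally show ?thesis .
  qed
  have p2: "(\<Sum>j\<le>Suc (Suc k). (if j = 0 then 0 else clu k (j - 1)) * x^(Suc (Suc k) - 2 * j) * y^j)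
      = y * luc k x y"
  proof -
    have "(\<Sum>j\<le>Suc (Suc k). (if j = 0 then 0 else clu k (j - 1)) * x^(Suc (Suc k) - 2 * j) * y^j)
        = (\<Sum>j\<le>Suc k. clu k j * x^(Suc (Suc k) - 2 * Suc j) * y^(Suc j))"
      by (subst sum.atMost_Suc_shift) simp
    also have "\<dots> = (\<Sum>j\<le>Suc k. y * (clu k j * x^(k - 2 * j) * y^j))"
      by (rule sum.cong) (simp_all add: algebra_simps)
    also have "\<dots> = y * (\<Sum>j\<le>k. clu k j * x^(k - 2 * j) * y^j)"
      using clu_zero[of k "Suc k"] by (simp add: sum_distrib_left)
    finally show ?thesis unfolding luc_def .
  qed
  have "luc (Suc (Suc k)) x y = (\<Sum>j\<le>Suc (Suc k). clu (Suc k) j * x^(Suc (Suc k) - 2 * j) * y^j)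
     + (\<Sum>j\<le>Suc (Suc k). (if j = 0 then 0 else clu k (j - 1)) * x^(Suc (Suc k) - 2 * j) * y^j)"
    unfolding luc_def by (simp add: sum.distrib algebra_simps)
  then show ?thesis using p1 p2 by simp
qed

lemma luc_line2: "luc k x (1 - x) = 1 + (x - 1)^k \<and> luc (Suc k) x (1 - x) = 1 + (x - 1)^(Suc k)"
proof (induction k)
  case 0
  have "luc 0 x (1 - x) = 2" unfolding luc_def by simp
  moreover have "luc 1 x (1 - x) = x" unfolding luc_def by simp
  ultimately show ?case by simp
next
  case (Suc k)
  then have a: "luc k x (1 - x) = 1 + (x - 1)^k" and b: "luc (Suc k) x (1 - x) = 1 + (x - 1)^(Suc k)" by auto
  have "luc (Suc (Suc k)) x (1 - x) = x * (1 + (x - 1)^(Suc k)) + (1 - x) * (1 + (x - 1)^k)"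
    using luc_rec a b by simp
  also have "\<dots> = 1 + (x - 1)^(Suc (Suc k))" by (simp add: algebra_simps)
  finally show ?case using b by simp
qed

lemma luc_odd: "odd k \<Longrightarrow> luc k x (1 - x) + (1 - x)^k = 1"
proof -
  assume k: "odd k"
  have "(x - 1)^k = (- (1 - x))^k" by simp
  also have "\<dots> = - ((1 - x)^k)" by (rule power_minus_odd[OF k])
  finally show ?thesis using luc_line2[of k x] by simp
qed

definition tr :: "nat \<Rightarrow> nat \<Rightarrow> nat \<Rightarrow> nat" where
  "tr a b x = (if x = a then b else if x = b then a else x)"

lemma tr_inv: "tr a b (tr a b x) = x" unfolding tr_def by auto

lemma tr_in: "a \<in> A \<Longrightarrow> b \<in> A \<Longrightarrow> x \<in> A \<Longrightarrow> tr a b x \<in> A" unfolding tr_def by auto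

lemma sum_tr:
  fixes g :: "nat \<Rightarrow> real"
  assumes "a \<in> A" "b \<in> A"
  shows "(\<Sum>i\<in>A. g (tr a b i)) = (\<Sum>i\<in>A. g i)"
  by (rule sum.reindex_bij_witness[where i = "tr a b" and j = "tr a b"])
     (auto simp: tr_inv tr_in assms)

lemma family_std:
  fixes n :: nat
  assumes n2: "n \<ge> 2"
  defines "D \<equiv> 2 * n - 3"
  defines "U \<equiv> (\<lambda>t. if t = n - 1 then 0 else D - 2 * t)"
  defines "V \<equiv> (\<lambda>t. if t = n - 1 then D else t)"
  defines "K \<equiv> (\<lambda>t. if t = n - 1 then 1 else clu D t)"
  shows "\<forall>t<n. K t > 0 \<and> U t + V t \<le> D" and "U 0 = D" "V 0 = 0" "U (n - 1) = 0" "V (n - 1) = D"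
    and "\<forall>x. (\<Sum>t<n. K t * x^(U t) * (1 - x)^(V t)) = 1"
proof -
  show "\<forall>t<n. K t > 0 \<and> U t + V t \<le> D"
  proof (intro allI impI)
    fix t assume t: "t < n"
    show "K t > 0 \<and> U t + V t \<le> D"
    proof (cases "t = n - 1")
      case True then show ?thesis unfolding K_def U_def V_def by simp
    next
      case False
      then have "2 * t \<le> D" using t n2 unfolding D_def by simp
      then show ?thesis unfolding K_def U_def V_def using False clu_pos by simp
    qed
  qed
  show "U 0 = D" "V 0 = 0" "U (n - 1) = 0" "V (n - 1) = D" unfolding U_def V_def using n2 by auto
  show "\<forall>x. (\<Sum>t<n. K t * x^(U t) * (1 - x)^(V t)) = 1"
  proof
    fix x :: real
    have nS: "n = Suc (n - 1)" using n2 by simp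
    have oddD: "odd D" unfolding D_def using n2 by presburger
    have "(\<Sum>t<n. K t * x^(U t) * (1 - x)^(V t))
       = (\<Sum>t<n - 1. K t * x^(U t) * (1 - x)^(V t)) + (1 - x)^D"
      by (subst nS, subst sum.lessThan_Suc) (simp add: K_def U_def V_def)
    also have "(\<Sum>t<n - 1. K t * x^(U t) * (1 - x)^(V t)) = (\<Sum>t<n - 1. clu D t * x^(D - 2 * t) * (1 - x)^t)"
      by (rule sum.cong) (auto simp: K_def U_def V_def)
    also have "\<dots> = (\<Sum>t\<le>D. clu D t * x^(D - 2 * t) * (1 - x)^t)"
    proof (rule sum.mono_neutral_left)
      show "finite {..D}" by simp
      show "{..<n - 1} \<subseteq> {..D}" unfolding D_def using n2 by auto
      show "\<forall>i\<in>{..D} - {..<n - 1}. clu D i * x ^ (D - 2 * i) * (1 - x) ^ i = 0"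
        using clu_zero unfolding D_def using n2 by auto
    qed
    also have "\<dots> = luc D x (1 - x)" unfolding luc_def by simp
    finally show "(\<Sum>t<n. K t * x^(U t) * (1 - x)^(V t)) = 1" using luc_odd[OF oddD, of x] by simp
  qed
qed

lemma family_std_ex:
  fixes n :: nat
  assumes n2: "n \<ge> 2"
  shows "\<exists>U V K. (\<forall>t<n. K t > 0 \<and> U t + V t \<le> 2 * n - 3) \<and> U 0 = 2 * n - 3 \<and> V 0 = 0
    \<and> U (n - 1) = 0 \<and> V (n - 1) = 2 * n - 3 \<and> (\<forall>x::real. (\<Sum>t<n. K t * x^(U t) * (1 - x)^(V t)) = 1)"
  using family_std[OF n2]
  by (intro exI[of _ "\<lambda>t. if t = n - 1 then 0 else 2 * n - 3 - 2 * t"]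
      exI[of _ "\<lambda>t. if t = n - 1 then 2 * n - 3 else t"]
      exI[of _ "\<lambda>t. if t = n - 1 then 1 else clu (2 * n - 3) t"] conjI) assumption+

lemma family:
  fixes n i0 j0 :: nat
  assumes n2: "n \<ge> 2" and i0: "i0 < n" and j0: "j0 < n" and ij: "i0 \<noteq> j0"
  shows "\<exists>U V K. (\<forall>i<n. K i > 0 \<and> U i + V i \<le> 2 * n - 3) \<and> U i0 = 2 * n - 3 \<and> V i0 = 0
    \<and> U j0 = 0 \<and> V j0 = 2 * n - 3 \<and> (\<forall>x::real. (\<Sum>i<n. K i * x^(U i) * (1 - x)^(V i)) = 1)"
proof -
  obtain U0 V0 K0 where h: "\<forall>t<n. K0 t > 0 \<and> U0 t + V0 t \<le> 2 * n - 3" "U0 0 = 2 * n - 3" "V0 0 = 0"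
    "U0 (n - 1) = 0" "V0 (n - 1) = 2 * n - 3" "\<forall>x::real. (\<Sum>t<n. K0 t * x^(U0 t) * (1 - x)^(V0 t)) = 1"
    using family_std_ex[OF n2] by blast
  define c where "c = tr i0 0 j0"
  define \<pi> where "\<pi> i = tr c (n - 1) (tr i0 0 i)" for i
  have c_lt: "c < n" unfolding c_def tr_def using i0 j0 by auto
  have c_nz: "c \<noteq> 0" unfolding c_def tr_def using ij by auto
  have n1: "0 \<noteq> n - 1" "n - 1 < n" "0 < n" using n2 by auto
  have pi0: "\<pi> i0 = 0" unfolding \<pi>_def using c_nz n1 by (simp add: tr_def)
  have pi1: "\<pi> j0 = n - 1" unfolding \<pi>_def c_def by (simp add: tr_def)
  have pin: "\<pi> i < n" if "i < n" for i
    unfolding \<pi>_def using tr_in[of c "{..<n}" "n - 1"] tr_in[of i0 "{..<n}" 0] c_lt n1 i0 that by simp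
  have sumpi: "(\<Sum>i<n. G (\<pi> i)) = (\<Sum>i<n. G i)" for G :: "nat \<Rightarrow> real"
  proof -
    have "(\<Sum>i<n. G (\<pi> i)) = (\<Sum>i<n. G (tr c (n - 1) i))"
      unfolding \<pi>_def using sum_tr[of i0 "{..<n}" 0 "\<lambda>i. G (tr c (n - 1) i)"] i0 n1 by simp
    also have "\<dots> = (\<Sum>i<n. G i)" using sum_tr[of c "{..<n}" "n - 1" G] c_lt n1 by simp
    finally show ?thesis .
  qed
  show ?thesis
  proof (intro exI conjI)
    show "\<forall>i<n. (K0 \<circ> \<pi>) i > 0 \<and> (U0 \<circ> \<pi>) i + (V0 \<circ> \<pi>) i \<le> 2 * n - 3" using h(1) pin by simp
    show "(U0 \<circ> \<pi>) i0 = 2 * n - 3" "(V0 \<circ> \<pi>) i0 = 0" "(U0 \<circ> \<pi>) j0 = 0" "(V0 \<circ> \<pi>) j0 = 2 * n - 3"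
      using h(2-5) pi0 pi1 by auto
    show "\<forall>x::real. (\<Sum>i<n. (K0 \<circ> \<pi>) i * x^((U0 \<circ> \<pi>) i) * (1 - x)^((V0 \<circ> \<pi>) i)) = 1"
    proof
      fix x :: real
      show "(\<Sum>i<n. (K0 \<circ> \<pi>) i * x^((U0 \<circ> \<pi>) i) * (1 - x)^((V0 \<circ> \<pi>) i)) = 1"
        using sumpi[of "\<lambda>t. K0 t * x^(U0 t) * (1 - x)^(V0 t)"] h(6) by simp
    qed
  qed
qed

lemma sum_two:
  fixes g :: "nat \<Rightarrow> 'a::comm_monoid_add"
  assumes "i0 < n" "j0 < n" "i0 \<noteq> j0" "\<forall>i. i \<noteq> i0 \<longrightarrow> i \<noteq> j0 \<longrightarrow> g i = 0"
  shows "(\<Sum>i<n. g i) = g i0 + g j0"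
proof -
  have "(\<Sum>i<n. g i) = (\<Sum>i\<in>{i0, j0}. g i)"
    by (rule sum.mono_neutral_right) (use assms in auto)
  then show ?thesis using assms(3) by simp
qed

theorem lemma4:
  fixes n d :: nat and p :: "(nat \<Rightarrow> nat) \<Rightarrow> real"
  assumes "n \<ge> 2" and "d \<ge> 1" and "p \<in> Hcal n d"
    and "\<exists>\<alpha>\<in>mon_support p. mon_deg n \<alpha> = d \<and> card {i. \<alpha> i \<noteq> 0} \<le> 2"
  shows "real d \<le> (2 * real (num_monomials p) - 3) / (2 * real n - 3)"
proof -
  note n2 = assms(1) and d1 = assms(2)
  define M where "M = mon_support p"
  have finM: "finite M" and zero_out: "\<forall>\<alpha>\<in>M. \<forall>i\<ge>n. \<alpha> i = 0"
    and degle: "\<forall>\<alpha>\<in>M. mon_deg n \<alpha> \<le> d" and nn: "\<forall>\<alpha>. p \<alpha> \<ge> 0"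
    and ev: "\<forall>x. (\<Sum>j<n. x j) = 1 \<longrightarrow> poly_eval n p x = 1"
    using assms(3) unfolding Hcal_def is_poly_def total_degree_eq_def M_def by auto
  have pos: "p \<alpha> > 0" if "\<alpha> \<in> M" for \<alpha>
    using that nn unfolding M_def mon_support_def by (simp add: order_le_neq_trans)
  obtain a0 where a0: "a0 \<in> M" "mon_deg n a0 = d" "card {i. a0 i \<noteq> 0} \<le> 2"
    using assms(4) unfolding M_def by blast
  define Sa where "Sa = {i. a0 i \<noteq> 0}"
  have Sa_sub: "Sa \<subseteq> {..<n}"
  proof
    fix i assume "i \<in> Sa"
    then have "a0 i \<noteq> 0" unfolding Sa_def by simp
    then show "i \<in> {..<n}" using zero_out a0(1) by (meson lessThan_iff not_le)
  qed
  have finSa: "finite Sa" using Sa_sub finite_subset by blast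
  have Sa_ne: "Sa \<noteq> {}"
  proof
    assume "Sa = {}"
    then have "\<forall>i. a0 i = 0" unfolding Sa_def by auto
    then have "mon_deg n a0 = 0" unfolding mon_deg_def by simp
    then show False using a0(2) d1 by simp
  qed
  have cSa: "card Sa \<le> 2" using a0(3) unfolding Sa_def .
  obtain i0 j0 where ij: "i0 < n" "j0 < n" "i0 \<noteq> j0" "Sa \<subseteq> {i0, j0}"
  proof -
    obtain i0 where i0: "i0 \<in> Sa" using Sa_ne by blast
    have i0n: "i0 < n" using i0 Sa_sub by auto
    show ?thesis
    proof (cases "\<exists>j\<in>Sa. j \<noteq> i0")
      case True
      then obtain j0 where j0: "j0 \<in> Sa" "j0 \<noteq> i0" by blast
      have j0n: "j0 < n" using j0(1) Sa_sub by auto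
      have ne: "i0 \<noteq> j0" using j0(2) by simp
      have sub: "Sa \<subseteq> {i0, j0}"
      proof
        fix k assume k: "k \<in> Sa"
        show "k \<in> {i0, j0}"
        proof (rule ccontr)
          assume kn: "k \<notin> {i0, j0}"
          have "card {i0, j0, k} \<le> card Sa" by (rule card_mono[OF finSa]) (use i0 j0 k in blast)
          moreover have "card {i0, j0, k} = 3" using kn ne by simp
          ultimately show False using cSa by simp
        qed
      qed
      show ?thesis by (rule that[OF i0n j0n ne sub])
    next
      case False
      define j0 where "j0 = (if i0 = 0 then 1 else 0::nat)"
      have j0n: "j0 < n" unfolding j0_def using n2 by simp
      have ne: "i0 \<noteq> j0" unfolding j0_def by simp
      have sub: "Sa \<subseteq> {i0, j0}"
      proof
        fix k assume "k \<in> Sa"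
        then have "k = i0" using False by blast
        then show "k \<in> {i0, j0}" by simp
      qed
      show ?thesis by (rule that[OF i0n j0n ne sub])
    qed
  qed
  have a0_out: "\<forall>i. i \<noteq> i0 \<longrightarrow> i \<noteq> j0 \<longrightarrow> a0 i = 0" using ij(4) unfolding Sa_def by auto
  have deg_a0: "a0 i0 + a0 j0 = d"
    using a0(2) sum_two[OF ij(1-3) a0_out] unfolding mon_deg_def by simp
  obtain U V K where fam: "\<forall>i<n. K i > 0 \<and> U i + V i \<le> 2 * n - 3" "U i0 = 2 * n - 3" "V i0 = 0"
    "U j0 = 0" "V j0 = 2 * n - 3" "\<forall>x::real. (\<Sum>i<n. K i * x^(U i) * (1 - x)^(V i)) = 1"
    using family[OF n2 ij(1-3)] by blast
  define D where "D = 2 * n - 3"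
  define e1 where "e1 \<alpha> = (\<Sum>i<n. \<alpha> i * U i)" for \<alpha> :: "nat \<Rightarrow> nat"
  define e2 where "e2 \<alpha> = (\<Sum>i<n. \<alpha> i * V i)" for \<alpha> :: "nat \<Rightarrow> nat"
  define w where "w \<alpha> = p \<alpha> * (\<Prod>i<n. K i ^ \<alpha> i)" for \<alpha>
  define F where "F a b = (\<Sum>\<alpha>\<in>{\<alpha>\<in>M. e1 \<alpha> = a \<and> e2 \<alpha> = b}. w \<alpha>)" for a b
  define S where "S = (\<lambda>\<alpha>. (e1 \<alpha>, e2 \<alpha>)) ` M"
  have w_nn: "w \<alpha> \<ge> 0" for \<alpha>
  proof -
    have "(\<Prod>i<n. K i ^ \<alpha> i) \<ge> 0"
    proof (rule prod_nonneg)
      fix i assume "i \<in> {..<n}"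
      then have "K i > 0" using fam(1) by simp
      then show "K i ^ \<alpha> i \<ge> 0" by simp
    qed
    then show ?thesis unfolding w_def using nn by simp
  qed
  have w_pos: "w \<alpha> > 0" if "\<alpha> \<in> M" for \<alpha>
  proof -
    have "(\<Prod>i<n. K i ^ \<alpha> i) > 0"
    proof (rule prod_pos)
      fix i assume "i \<in> {..<n}"
      then have "K i > 0" using fam(1) by simp
      then show "K i ^ \<alpha> i > 0" by simp
    qed
    then show ?thesis unfolding w_def using pos[OF that] by simp
  qed
  have e_deg: "e1 \<alpha> + e2 \<alpha> \<le> D * d" if "\<alpha> \<in> M" for \<alpha>
  proof -
    have "e1 \<alpha> + e2 \<alpha> = (\<Sum>i<n. \<alpha> i * (U i + V i))"
      unfolding e1_def e2_def by (simp add: sum.distrib algebra_simps)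
    also have "\<dots> \<le> (\<Sum>i<n. \<alpha> i * D)"
      by (rule sum_mono) (use fam(1) in \<open>simp add: D_def\<close>)
    also have "\<dots> = D * mon_deg n \<alpha>" unfolding mon_deg_def by (simp add: sum_distrib_left algebra_simps)
    also have "\<dots> \<le> D * d" using degle that by simp
    finally show ?thesis .
  qed
  have e1a0: "e1 a0 = a0 i0 * D"
    unfolding e1_def using sum_two[OF ij(1-3), of "\<lambda>i. a0 i * U i"] a0_out fam(2,4) unfolding D_def by simp
  have e2a0: "e2 a0 = a0 j0 * D"
    unfolding e2_def using sum_two[OF ij(1-3), of "\<lambda>i. a0 i * V i"] a0_out fam(3,5) unfolding D_def by simp
  have F_nn: "\<forall>a b. F a b \<ge> 0" unfolding F_def using w_nn by (simp add: sum_nonneg)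
  have top: "\<exists>a\<le>D * d. F a (D * d - a) \<noteq> 0"
  proof (intro exI conjI)
    show "e1 a0 \<le> D * d" using e_deg[OF a0(1)] by simp
    have "D * d = D * (a0 i0 + a0 j0)" using deg_a0 by simp
    also have "\<dots> = e1 a0 + e2 a0" using e1a0 e2a0 by (simp add: algebra_simps)
    finally have "D * d - e1 a0 = e2 a0" by simp
    then have "F (e1 a0) (D * d - e1 a0) = (\<Sum>\<alpha>\<in>{\<alpha>\<in>M. e1 \<alpha> = e1 a0 \<and> e2 \<alpha> = e2 a0}. w \<alpha>)"
      unfolding F_def by simp
    also have "\<dots> \<ge> w a0" by (rule member_le_sum) (use a0(1) finM w_nn in auto)
    finally show "F (e1 a0) (D * d - e1 a0) \<noteq> 0" using w_pos[OF a0(1)] by simp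
  qed
  have hid: "\<forall>x. (\<Sum>k\<le>D * d. \<Sum>i\<le>k. F i (k - i) * x^i * (1 - x)^(k - i)) = 1"
  proof
    fix x :: real
    define y where "y i = K i * x^(U i) * (1 - x)^(V i)" for i
    have "(\<Sum>j<n. y j) = 1" unfolding y_def using fam(6) by simp
    then have pe: "(\<Sum>\<alpha>\<in>M. p \<alpha> * (\<Prod>i<n. y i ^ \<alpha> i)) = 1" using ev unfolding poly_eval_def M_def by simp
    have prodeq: "p \<alpha> * (\<Prod>i<n. y i ^ \<alpha> i) = w \<alpha> * x^(e1 \<alpha>) * (1 - x)^(e2 \<alpha>)" for \<alpha>
    proof -
      have "(\<Prod>i<n. y i ^ \<alpha> i) = (\<Prod>i<n. K i ^ \<alpha> i) * (\<Prod>i<n. x ^ (\<alpha> i * U i)) * (\<Prod>i<n. (1 - x) ^ (\<alpha> i * V i))"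
        unfolding y_def by (simp add: power_mult_distrib prod.distrib power_mult mult.commute)
      also have "\<dots> = (\<Prod>i<n. K i ^ \<alpha> i) * x^(e1 \<alpha>) * (1 - x)^(e2 \<alpha>)"
        unfolding e1_def e2_def by (simp add: power_sum)
      finally show ?thesis unfolding w_def by simp
    qed
    have pe2: "(\<Sum>\<alpha>\<in>M. w \<alpha> * x^(e1 \<alpha>) * (1 - x)^(e2 \<alpha>)) = 1" using pe prodeq by simp
    have Fexp: "F i (k - i) * x^i * (1 - x)^(k - i)
        = (\<Sum>\<alpha>\<in>M. (if e1 \<alpha> = i \<and> e2 \<alpha> = k - i then w \<alpha> * x^i * (1 - x)^(k - i) else 0))" for i k
    proof -
      have "F i (k - i) = (\<Sum>\<alpha>\<in>M. (if e1 \<alpha> = i \<and> e2 \<alpha> = k - i then w \<alpha> else 0))"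
        unfolding F_def using finM by (simp add: sum.inter_filter)
      then have "F i (k - i) * x^i * (1 - x)^(k - i)
          = (\<Sum>\<alpha>\<in>M. (if e1 \<alpha> = i \<and> e2 \<alpha> = k - i then w \<alpha> else 0) * x^i * (1 - x)^(k - i))"
        by (simp add: sum_distrib_right)
      also have "\<dots> = (\<Sum>\<alpha>\<in>M. (if e1 \<alpha> = i \<and> e2 \<alpha> = k - i then w \<alpha> * x^i * (1 - x)^(k - i) else 0))"
        by (rule sum.cong) auto
      finally show ?thesis .
    qed
    have single: "(\<Sum>k\<le>D * d. \<Sum>i\<le>k. (if e1 \<alpha> = i \<and> e2 \<alpha> = k - i then w \<alpha> * x^i * (1 - x)^(k - i) else 0))
        = w \<alpha> * x^(e1 \<alpha>) * (1 - x)^(e2 \<alpha>)" if am: "\<alpha> \<in> M" for \<alpha>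
    proof -
      have inner: "(\<Sum>i\<le>k. (if e1 \<alpha> = i \<and> e2 \<alpha> = k - i then w \<alpha> * x^i * (1 - x)^(k - i) else 0))
          = (if k = e1 \<alpha> + e2 \<alpha> then w \<alpha> * x^(e1 \<alpha>) * (1 - x)^(e2 \<alpha>) else 0)" for k
      proof -
        have "(\<Sum>i\<le>k. (if e1 \<alpha> = i \<and> e2 \<alpha> = k - i then w \<alpha> * x^i * (1 - x)^(k - i) else 0))
            = (\<Sum>i\<le>k. (if e1 \<alpha> = i then (if e2 \<alpha> = k - e1 \<alpha> then w \<alpha> * x^(e1 \<alpha>) * (1 - x)^(k - e1 \<alpha>) else 0) else 0))"
          by (rule sum.cong) auto
        also have "\<dots> = (if e1 \<alpha> \<le> k then (if e2 \<alpha> = k - e1 \<alpha> then w \<alpha> * x^(e1 \<alpha>) * (1 - x)^(k - e1 \<alpha>) else 0) else 0)"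
          by simp
        also have "\<dots> = (if k = e1 \<alpha> + e2 \<alpha> then w \<alpha> * x^(e1 \<alpha>) * (1 - x)^(e2 \<alpha>) else 0)"
          by auto
        finally show ?thesis .
      qed
      have "(\<Sum>k\<le>D * d. \<Sum>i\<le>k. (if e1 \<alpha> = i \<and> e2 \<alpha> = k - i then w \<alpha> * x^i * (1 - x)^(k - i) else 0))
          = (\<Sum>k\<le>D * d. (if k = e1 \<alpha> + e2 \<alpha> then w \<alpha> * x^(e1 \<alpha>) * (1 - x)^(e2 \<alpha>) else 0))"
        using inner by simp
      also have "\<dots> = w \<alpha> * x^(e1 \<alpha>) * (1 - x)^(e2 \<alpha>)" using e_deg[OF am] by simp
      finally show ?thesis .
    qed
    have "(\<Sum>k\<le>D * d. \<Sum>i\<le>k. F i (k - i) * x^i * (1 - x)^(k - i))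
        = (\<Sum>k\<le>D * d. \<Sum>i\<le>k. \<Sum>\<alpha>\<in>M. (if e1 \<alpha> = i \<and> e2 \<alpha> = k - i then w \<alpha> * x^i * (1 - x)^(k - i) else 0))"
      using Fexp by simp
    also have "\<dots> = (\<Sum>k\<le>D * d. \<Sum>\<alpha>\<in>M. \<Sum>i\<le>k. (if e1 \<alpha> = i \<and> e2 \<alpha> = k - i then w \<alpha> * x^i * (1 - x)^(k - i) else 0))"
      by (rule sum.cong[OF refl], rule sum.swap)
    also have "\<dots> = (\<Sum>\<alpha>\<in>M. \<Sum>k\<le>D * d. \<Sum>i\<le>k. (if e1 \<alpha> = i \<and> e2 \<alpha> = k - i then w \<alpha> * x^i * (1 - x)^(k - i) else 0))"
      by (rule sum.swap)
    also have "\<dots> = (\<Sum>\<alpha>\<in>M. w \<alpha> * x^(e1 \<alpha>) * (1 - x)^(e2 \<alpha>))"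
      by (rule sum.cong[OF refl]) (rule single)
    finally show "(\<Sum>k\<le>D * d. \<Sum>i\<le>k. F i (k - i) * x^i * (1 - x)^(k - i)) = 1" using pe2 by simp
  qed
  have finS: "finite S" unfolding S_def using finM by simp
  have suppS: "\<forall>a b. a + b \<le> D * d \<longrightarrow> F a b \<noteq> 0 \<longrightarrow> (a, b) \<in> S"
  proof (intro allI impI)
    fix a b assume "F a b \<noteq> 0"
    then have "{\<alpha>\<in>M. e1 \<alpha> = a \<and> e2 \<alpha> = b} \<noteq> {}" unfolding F_def by (metis sum.empty)
    then show "(a, b) \<in> S" unfolding S_def by force
  qed
  have D1: "D \<ge> 1" unfolding D_def using n2 by simp
  have Dd1: "D * d \<ge> 1" using D1 d1 by simp
  have main: "D * d + 3 \<le> 2 * card S" by (rule dkr[OF Dd1 F_nn top hid finS suppS])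
  have "card S \<le> card M" unfolding S_def by (rule card_image_le[OF finM])
  then have nat_ineq: "D * d + 3 \<le> 2 * num_monomials p" using main unfolding num_monomials_def M_def by simp
  have rD: "real D = 2 * real n - 3" unfolding D_def using n2 by (simp add: of_nat_diff)
  have "real (D * d + 3) \<le> real (2 * num_monomials p)" using nat_ineq by (simp only: of_nat_le_iff)
  then have "(2 * real n - 3) * real d + 3 \<le> 2 * real (num_monomials p)" using rD by simp
  moreover have "2 * real n - 3 > 0" using n2 by simp
  ultimately show ?thesis by (simp add: pos_le_divide_eq algebra_simps)
qed

end
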